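(* Under the standing setup and assumptions (A1)–(A3) described in the context, let $\delta>0$ be as in (A3). Let $(p^b_i)_{i\in I}$ and $(p^t_j)_{j\in J}$ be probability vectors with $p^b_i=0$ for $i\notin I_\delta$ and $p^t_j=0$ for $j\notin J_\delta$; let $\rho^b=\mathrm{diag}(p^b_i)$, $\rho^t=\mathrm{diag}(p^t_j)$, and $$\rho_0=\sum_{i,i'\in I}\sum_{j,j'\in J}\rho^b_{ii'}\rho^t_{jj'}\,|i,j\rangle\langle i',j'|.$$ Then $U\rho_0U^\dagger$ is supported in $V$, and there exist Hermitian matrices $\sigma^b$ (indexed by $I\times I$) and $\sigma^t$ (indexed by $J\times J$) such that $$U\rho_0U^\dagger=\sum_{i,i'\in I}\sum_{j,j'\in J}\sigma^b_{ii'}\sigma^t_{jj'}\,|i,j\rangle\langle i',j'|,$$ and $\mathrm{Spec}(\sigma^b)=\mathrm{Spec}(\rho^b)$, $\mathrm{Spec}(\sigma^t)=\mathrm{Spec}(\rho^t)$ (equality of eigenvalues counted with multiplicity).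
   Context: Standing setup. $\mathcal H$ is a finite-dimensional complex Hilbert space; $I$ and $J$ are finite index sets and $\{|i,j\rangle: i\in I,j\in J\}$ is an orthonormal family in $\mathcal H$ (physically: low-energy edge states of a gapped 2D system on a cylinder, $i$ labelling the bottom edge and $j$ the top edge, in a fixed topological sector). $V$ denotes their span. Real numbers $\varepsilon^b_i$ ($i\in I$) and $\varepsilon^t_j$ ($j\in J$) are given (physically $\varepsilon^b_i=E^b_i-\mu_bN^b_i$, $\varepsilon^t_j=E^t_j-\mu_tN^t_j$). There is a distinguished index, denoted $\Omega$, in $I$ and in $J$ with $\varepsilon^b_\Omega=\varepsilon^t_\Omega=0\le \varepsilon^b_i,\varepsilon^t_j$ for all $i,j$. For $\delta>0$ put $I_\delta=\{i\in I:\varepsilon^b_i\le\delta\}$, $J_\delta=\{j\in J:\varepsilon^t_j\le\delta\}$, $V_\delta=\mathrm{span}\{|i,j\rangle:i\in I_\delta,j\in J_\delta\}$. $\mathcal A_b$ and $\mathcal A_t$ are sets of linear operators on $\mathcal H$ ("operators supported near the bottom edge / top edge"), each closed under sums, scalar multiples, products and adjoints and containing the identity, such that every element of $\mathcal A_b$ commutes with every element of $\mathcal A_t$. $U$ is a unitary on $\mathcal H$ (the flux-insertion evolution, a finite-time evolution by a local Hamiltonian) such that $U^\dagger\mathcal A_bU\subseteq\mathcal A_b$, $U\mathcal A_bU^\dagger\subseteq\mathcal A_b$, $U^\dagger\mathcal A_tU\subseteq\mathcal A_t$, $U\mathcal A_tU^\dagger\subseteq\mathcal A_t$ (idealized Lieb–Robinson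 locality). Assumptions. (A1) For all $i,i'\in I$ there is $O^b_{i'i}\in\mathcal A_b$ with $O^b_{i'i}|k,j\rangle=\delta_{ki}|i',j\rangle$ for all $k\in I,j\in J$; for all $j,j'\in J$ there is $O^t_{j'j}\in\mathcal A_t$ with $O^t_{j'j}|i,l\rangle=\delta_{lj}|i,j'\rangle$ for all $i\in I,l\in J$. (A2) For all $i\in I$, $j\in J$, $O^b\in\mathcal A_b$, $O^t\in\mathcal A_t$: $\langle i,j|O^bO^t|i,j\rangle=\langle i,j|O^b|i,j\rangle\langle i,j|O^t|i,j\rangle$. (A3) There is $\delta>0$ with $U V_\delta\subseteq V$. (The diagonal $\rho^b,\rho^t$ model the edge Gibbs states at temperatures well below $\delta$.) *)

theory Defs
  imports "Jordan_Normal_Form.Schur_Decomposition"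
begin

text \<open>Hilbert space H = complex column vectors of dimension d.
  Operators on H = complex d x d matrices. Physics inner product
  <x|y> = sum_r cnj (x r) * y r, which in JNF notation is  y \<bullet>c x.\<close>

definition braket :: "complex vec \<Rightarrow> complex vec \<Rightarrow> complex" where
  "braket x y = y \<bullet>c x"

definition hermitian_mat :: "complex mat \<Rightarrow> bool" where
  "hermitian_mat A \<longleftrightarrow> mat_adjoint A = A"

definition unitary_mat :: "nat \<Rightarrow> complex mat \<Rightarrow> bool" where
  "unitary_mat d U \<longleftrightarrow> U \<in> carrier_mat d d \<and>
     U * mat_adjoint U = 1\<^sub>m d \<and> mat_adjoint U * U = 1\<^sub>m d"

definition spec_mset :: "complex mat \<Rightarrow> complex multiset" where
  "spec_mset A = proots (char_poly A)"

definition in_span_fam :: "nat \<Rightarrow> (nat \<Rightarrow> nat \<Rightarrow> complex vec) \<Rightarrow> (nat \<times> nat) set \<Rightarrow> complex vec \<Rightarrow> bool" where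
  "in_span_fam d e S v \<longleftrightarrow> v \<in> carrier_vec d \<and>
     (\<exists>c :: nat \<Rightarrow> nat \<Rightarrow> complex. \<forall>r<d. v $ r = (\<Sum>(i,j)\<in>S. c i j * (e i j $ r)))"

definition ketbra :: "nat \<Rightarrow> complex vec \<Rightarrow> complex vec \<Rightarrow> complex mat" where
  "ketbra d x y = mat d d (\<lambda>(r,c). x $ r * cnj (y $ c))"

text \<open>sum_{i,i' in I} sum_{j,j' in J} A_{ii'} B_{jj'} |i,j><i',j'| with I = {0..<m}, J = {0..<k}.\<close>
definition prod_op :: "nat \<Rightarrow> (nat \<Rightarrow> nat \<Rightarrow> complex vec) \<Rightarrow> nat \<Rightarrow> nat \<Rightarrow> complex mat \<Rightarrow> complex mat \<Rightarrow> complex mat" where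
  "prod_op d e m k A B = mat d d (\<lambda>(r,c).
     \<Sum>i<m. \<Sum>i'<m. \<Sum>j<k. \<Sum>j'<k. A $$ (i,i') * B $$ (j,j') * ketbra d (e i j) (e i' j') $$ (r,c))"

definition diag_of :: "nat \<Rightarrow> (nat \<Rightarrow> real) \<Rightarrow> complex mat" where
  "diag_of m p = mat m m (\<lambda>(i,i'). if i = i' then complex_of_real (p i) else 0)"

definition op_algebra :: "nat \<Rightarrow> complex mat set \<Rightarrow> bool" where
  "op_algebra d A \<longleftrightarrow> A \<subseteq> carrier_mat d d \<and> 1\<^sub>m d \<in> A \<and>
     (\<forall>X\<in>A. \<forall>Y\<in>A. X + Y \<in> A \<and> X * Y \<in> A) \<and>
     (\<forall>X\<in>A. \<forall>a::complex. a \<cdot>\<^sub>m X \<in> A) \<and>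
     (\<forall>X\<in>A. mat_adjoint X \<in> A)"

end

theory Submission
  imports Defs
begin


lemma char_poly_mult_comm:
  fixes X Y :: "'a::field mat"
  assumes X: "X \<in> carrier_mat n n" and Y: "Y \<in> carrier_mat n n"
  shows "char_poly (X * Y) = char_poly (Y * X)"
proof -
  let ?P = "map_mat (\<lambda>a. [:a:])"
  let ?x = "[:0,1:] :: 'a poly"
  define M where "M = four_block_mat (1\<^sub>m n) (?P X) (?P Y) (?x \<cdot>\<^sub>m 1\<^sub>m n)"
  define M' where "M' = four_block_mat (?x \<cdot>\<^sub>m 1\<^sub>m n) (?P Y) (?P X) (1\<^sub>m n)"
  have PX: "?P X \<in> carrier_mat n n" and PY: "?P Y \<in> carrier_mat n n" using X Y by auto
  have cpm: "char_poly_matrix (A * B) = ?x \<cdot>\<^sub>m 1\<^sub>m n - ?P A * ?P B"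
    if A: "A \<in> carrier_mat n n" and B: "B \<in> carrier_mat n n" for A B :: "'a mat"
  proof -
    have "?P A * ?P B = ?P (A * B)" using map_poly_mult(1)[OF A B] by simp
    then show ?thesis unfolding char_poly_matrix_def using A B
      by (intro eq_matI, auto)
  qed
  have "det M = det (1\<^sub>m n * (?x \<cdot>\<^sub>m 1\<^sub>m n) - ?P X * ?P Y)"
    unfolding M_def
    by (rule det_four_block_mat, insert PX PY, auto)
  also have "1\<^sub>m n * (?x \<cdot>\<^sub>m 1\<^sub>m n) = ?x \<cdot>\<^sub>m 1\<^sub>m n" by simp
  finally have dM: "det M = char_poly (X * Y)"
    unfolding char_poly_def cpm[OF X Y] .
  have "det M' = det ((?x \<cdot>\<^sub>m 1\<^sub>m n) * 1\<^sub>m n - ?P Y * ?P X)"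
    unfolding M'_def
    by (rule det_four_block_mat, insert PX PY, auto)
  also have "(?x \<cdot>\<^sub>m 1\<^sub>m n) * 1\<^sub>m n = ?x \<cdot>\<^sub>m 1\<^sub>m n" by simp
  finally have dM': "det M' = char_poly (Y * X)"
    unfolding char_poly_def cpm[OF Y X] .
  have Mc: "M \<in> carrier_mat (n + n) (n + n)" unfolding M_def using PX PY by auto
  define M1 where "M1 = mat (n + n) (n + n) (\<lambda> (i,j). M $$ ((if i < n then i + n else i - n),j))"
  have M1c: "M1 \<in> carrier_mat (n + n) (n + n)" unfolding M1_def by auto
  have "det M = (-1)^(n*n) * det M1" unfolding M1_def by (rule det_swap_rows[OF Mc])
  also have "det M1 = (-1)^(n*n) * det (mat (n + n) (n + n) (\<lambda> (i,j). 
   M1 $$ (i,(if j < n then j + n else j - n))))" by (rule det_swap_cols[OF M1c])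
  also have "mat (n + n) (n + n) (\<lambda> (i,j). M1 $$ (i,(if j < n then j + n else j - n))) = M'"
    unfolding M1_def M'_def M_def using PX PY
    by (intro eq_matI, auto)
  finally have "det M = ((-1)^(n*n) * (-1)^(n*n)) * det M'" by simp
  also have "((-1)^(n*n) * (-1)^(n*n) :: 'a poly) = 1"
    by (simp add: power_mult_distrib[symmetric])
  finally show ?thesis using dM dM' by simp
qed



lemma mult_entry:
  assumes "A \<in> carrier_mat n1 n2" "B \<in> carrier_mat n2 n3" "i < n1" "j < n3"
  shows "(A * B) $$ (i,j) = (\<Sum>l<n2. A $$ (i,l) * B $$ (l,j))"
  using assms by (simp add: scalar_prod_def atLeast0LessThan)

lemma adj_carrier[simp]: "A \<in> carrier_mat n1 n2 \<Longrightarrow> mat_adjoint A \<in> carrier_mat n2 n1"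
  unfolding mat_adjoint_def by (auto simp: mat_of_rows_def)

lemma adj_dims[simp]: "dim_row (mat_adjoint A) = dim_col A" "dim_col (mat_adjoint A) = dim_row A"
  unfolding mat_adjoint_def by (auto simp: mat_of_rows_def)

lemma adj_entry:
  assumes "A \<in> carrier_mat n1 n2" "i < n2" "j < n1"
  shows "mat_adjoint A $$ (i,j) = cnj (A $$ (j,i))"
  using assms unfolding mat_adjoint_def by (auto simp: mat_of_rows_def)

lemma cnj_mult_self: "cnj c * c = complex_of_real ((cmod c)^2)"
  by (metis complex_norm_square mult.commute)

lemma sum_cnj_self_real:
  "(\<Sum>x\<in>S. cnj (f x) * f x) = complex_of_real (\<Sum>x\<in>S. (cmod (f x))^2)"
  by (simp add: cnj_mult_self)

lemma spec_lemma:
  fixes n nn :: nat and C :: "nat \<Rightarrow> nat \<Rightarrow> nat \<Rightarrow> complex" and p :: "nat \<Rightarrow> real"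
    and good :: "nat \<Rightarrow> bool" and R :: "nat \<Rightarrow> nat \<Rightarrow> nat \<Rightarrow> complex" and T :: "nat \<Rightarrow> nat \<Rightarrow> complex"
  assumes supp: "\<forall>i<n. p i \<noteq> 0 \<longrightarrow> good i"
    and fac: "\<forall>i<n. good i \<longrightarrow> (\<forall>x<n. \<forall>x'<n. \<forall>y<nn. \<forall>y'<nn.
               C i x y * cnj (C i x' y') = R i x x' * T y y')"
    and Rdef: "\<forall>i<n. good i \<longrightarrow> (\<forall>x<n. \<forall>x'<n. R i x x' = (\<Sum>y<nn. C i x y * cnj (C i x' y)))"
    and Tdef: "\<forall>i<n. good i \<longrightarrow> (\<forall>y<nn. \<forall>y'<nn. T y y' = (\<Sum>x<n. C i x y * cnj (C i x y')))"
    and orth: "\<forall>i<n. \<forall>i'<n. good i \<longrightarrow> good i' \<longrightarrow>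
               (\<Sum>x<n. \<Sum>y<nn. cnj (C i x y) * C i' x y) = (if i = i' then 1 else 0)"
    and ex: "\<exists>i<n. good i"
  shows "char_poly (mat n n (\<lambda>(a,a'). \<Sum>i<n. complex_of_real (p i) * R i a a'))
         = char_poly (diag_of n p)"
proof -
  obtain i0 where i0: "i0 < n" "good i0" using ex by auto
  have "(\<Sum>y<nn. T y y) = (\<Sum>y<nn. \<Sum>x<n. cnj (C i0 x y) * C i0 x y)"
    using Tdef i0 by (simp add: mult.commute)
  also have "\<dots> = 1" using orth i0 by (subst sum.swap, auto)
  finally have trT: "(\<Sum>y<nn. T y y) = 1" .
  then obtain y0 where y0: "y0 < nn" "T y0 y0 \<noteq> 0"
    by (metis (no_types, lifting) lessThan_iff sum.neutral zero_neq_one)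
  define t where "t = (\<Sum>x<n. (cmod (C i0 x y0))^2)"
  have "T y0 y0 = (\<Sum>x<n. cnj (C i0 x y0) * C i0 x y0)" using Tdef i0 y0(1) by (simp add: mult.commute)
  also have "\<dots> = complex_of_real t" unfolding t_def by (rule sum_cnj_self_real)
  finally have Tt: "T y0 y0 = complex_of_real t" .
  have "t \<ge> 0" unfolding t_def by (intro sum_nonneg) auto
  moreover have "t \<noteq> 0" using Tt y0 by auto
  ultimately have t0: "t > 0" by simp
  define s where "s = sqrt t"
  have s0: "s > 0" unfolding s_def using t0 by auto
  have sst: "s * s = t" using t0 unfolding s_def by simp
  have ss: "complex_of_real s * complex_of_real s = complex_of_real t"
    by (simp add: of_real_mult[symmetric] sst del: of_real_mult)
  define A where "A = mat n n (\<lambda>(a,i). if p i \<noteq> 0 then C i a y0 / complex_of_real s else 0)"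
  define D where "D = diag_of n p"
  have Ac: "A \<in> carrier_mat n n" and Dc: "D \<in> carrier_mat n n" unfolding A_def D_def diag_of_def by auto
  have c1: "R i x x' = C i x y0 * cnj (C i x' y0) / complex_of_real t"
    if "i < n" "good i" "x < n" "x' < n" for i x x'
  proof -
    have "C i x y0 * cnj (C i x' y0) = R i x x' * complex_of_real t"
      using fac[rule_format, OF that y0(1) y0(1)] Tt by simp
    then show ?thesis using t0 by (simp add: field_simps)
  qed
  have c2: "C i x y * complex_of_real t = C i x y0 * T y y0"
    if i: "i < n" "good i" and x: "x < n" and y: "y < nn" for i x y
  proof -
    have tt: "(\<Sum>x'<n. cnj (C i x' y0) * C i x' y0) = complex_of_real t"
      using Tdef i Tt y0(1) by (simp add: mult.commute)
    have "C i x y * complex_of_real t = (\<Sum>x'<n. C i x y * cnj (C i x' y0) * C i x' y0)"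
      by (simp add: tt[symmetric] sum_distrib_left mult.assoc)
    also have "\<dots> = (\<Sum>x'<n. R i x x' * T y y0 * C i x' y0)"
      using fac[rule_format, OF i x _ y y0(1)] by (intro sum.cong, auto)
    also have "\<dots> = (\<Sum>x'<n. C i x y0 * T y y0 * (cnj (C i x' y0) * C i x' y0) / complex_of_real t)"
    proof (rule sum.cong[OF refl])
      fix x' assume "x' \<in> {..<n}"
      then have "R i x x' = C i x y0 * cnj (C i x' y0) / complex_of_real t" using c1 i x by auto
      then show "R i x x' * T y y0 * C i x' y0 = C i x y0 * T y y0 * (cnj (C i x' y0) * C i x' y0) / complex_of_real t"
        by (simp add: field_simps)
    qed
    also have "\<dots> = C i x y0 * T y y0 * (\<Sum>x'<n. cnj (C i x' y0) * C i x' y0) / complex_of_real t"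
      by (simp add: sum_distrib_left sum_divide_distrib)
    also have "\<dots> = C i x y0 * T y y0" using tt t0 by simp
    finally show ?thesis .
  qed
  define G where "G = (\<Sum>y<nn. cnj (T y y0) * T y y0)"
  have c3pre: "(\<Sum>x<n. cnj (C i x y0) * C i' x y0) * G = (if i = i' then complex_of_real t * complex_of_real t else 0)"
    if "i < n" "i' < n" "good i" "good i'" for i i'
  proof -
    have "(if i = i' then complex_of_real t * complex_of_real t else 0)
       = (\<Sum>x<n. \<Sum>y<nn. cnj (C i x y) * C i' x y) * (complex_of_real t * complex_of_real t)"
      using orth that by simp
    also have "\<dots> = (\<Sum>x<n. \<Sum>y<nn. cnj (C i x y * complex_of_real t) * (C i' x y * complex_of_real t))"
      by (simp add: sum_distrib_left sum_distrib_right mult_ac)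
    also have "\<dots> = (\<Sum>x<n. \<Sum>y<nn. cnj (C i x y0 * T y y0) * (C i' x y0 * T y y0))"
      using c2 that by (intro sum.cong refl, auto)
    also have "\<dots> = (\<Sum>x<n. cnj (C i x y0) * C i' x y0) * G"
      unfolding G_def by (simp add: sum_distrib_right sum_distrib_left mult_ac)
    finally show ?thesis by simp
  qed
  have G: "G = complex_of_real t"
  proof -
    have "(\<Sum>x<n. cnj (C i0 x y0) * C i0 x y0) = complex_of_real t"
      using Tdef i0 Tt y0(1) by (simp add: mult.commute)
    then have "complex_of_real t * G = complex_of_real t * complex_of_real t"
      using c3pre[OF i0(1) i0(1) i0(2) i0(2)] by simp
    then show ?thesis using t0 by simp
  qed
  have c3: "(\<Sum>x<n. cnj (C i x y0) * C i' x y0) = (if i = i' then complex_of_real t else 0)"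
    if "i < n" "i' < n" "good i" "good i'" for i i'
    using c3pre[OF that] G t0 by (auto split: if_splits)
  define B where "B = mat n n (\<lambda>(a,i). A $$ (a,i) * complex_of_real (p i))"
  have Bc: "B \<in> carrier_mat n n" unfolding B_def by auto
  have AD: "A * D = B"
  proof (rule eq_matI)
    fix a i assume a: "a < dim_row B" and i: "i < dim_col B"
    then have "(A * D) $$ (a,i) = (\<Sum>l<n. A $$ (a,l) * D $$ (l,i))"
      using Ac Dc Bc by (intro mult_entry, auto)
    also have "\<dots> = (\<Sum>l\<in>{i}. A $$ (a,l) * D $$ (l,i))"
      using i Bc by (intro sum.mono_neutral_right, auto simp: D_def diag_of_def)
    also have "\<dots> = B $$ (a,i)" using a i Bc by (simp add: D_def diag_of_def B_def)
    finally show "(A * D) $$ (a,i) = B $$ (a,i)" .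
  qed (insert Ac Dc Bc, auto)
  have sig: "mat n n (\<lambda>(a,a'). \<Sum>i<n. complex_of_real (p i) * R i a a') = B * mat_adjoint A"
  proof (rule eq_matI)
    fix a a' assume a: "a < dim_row (B * mat_adjoint A)" and a': "a' < dim_col (B * mat_adjoint A)"
    then have aa: "a < n" "a' < n" using Bc Ac by auto
    have "(B * mat_adjoint A) $$ (a,a') = (\<Sum>i<n. B $$ (a,i) * mat_adjoint A $$ (i,a'))"
      using aa Bc Ac by (intro mult_entry, auto)
    also have "\<dots> = (\<Sum>i<n. complex_of_real (p i) * R i a a')"
    proof (rule sum.cong[OF refl])
      fix i assume "i \<in> {..<n}"
      then have i: "i < n" by auto
      have adj: "mat_adjoint A $$ (i,a') = cnj (A $$ (a',i))" by (rule adj_entry[OF Ac i aa(2)])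
      show "B $$ (a,i) * mat_adjoint A $$ (i,a') = complex_of_real (p i) * R i a a'"
      proof (cases "p i = 0")
        case True then show ?thesis using i aa unfolding adj by (simp add: B_def A_def)
      next
        case False
        then have g: "good i" using supp i by auto
        have "B $$ (a,i) * mat_adjoint A $$ (i,a') =
           complex_of_real (p i) * (C i a y0 * cnj (C i a' y0) / (complex_of_real s * complex_of_real s))"
          using i aa False unfolding adj by (simp add: B_def A_def)
        also have "\<dots> = complex_of_real (p i) * R i a a'" using c1[OF i g aa] ss by simp
        finally show ?thesis .
      qed
    qed
    finally show "mat n n (\<lambda>(a,a'). \<Sum>i<n. complex_of_real (p i) * R i a a') $$ (a,a') = (B * mat_adjoint A) $$ (a,a')"
      using aa by simp
  qed (insert Ac Bc, auto)
  have AAD: "mat_adjoint A * B = D"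
  proof (rule eq_matI)
    fix i i' assume i: "i < dim_row D" and i': "i' < dim_col D"
    then have ii: "i < n" "i' < n" using Dc by auto
    have "(mat_adjoint A * B) $$ (i,i') = (\<Sum>a<n. mat_adjoint A $$ (i,a) * B $$ (a,i'))"
      using ii Bc Ac by (intro mult_entry, auto)
    also have "\<dots> = (\<Sum>a<n. cnj (A $$ (a,i)) * A $$ (a,i')) * complex_of_real (p i')"
      using ii by (simp add: adj_entry[OF Ac] B_def sum_distrib_left sum_distrib_right mult_ac)
    also have "\<dots> = D $$ (i,i')"
    proof (cases "p i' = 0")
      case True then show ?thesis using ii by (simp add: D_def diag_of_def)
    next
      case False
      show ?thesis
      proof (cases "p i = 0")
        case True
        then have "i \<noteq> i'" using False by auto
        then show ?thesis using ii True by (simp add: D_def diag_of_def A_def)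
      next
        case F2: False
        have "(\<Sum>a<n. cnj (A $$ (a,i)) * A $$ (a,i')) = (\<Sum>a<n. cnj (C i a y0) * C i' a y0) / (complex_of_real s * complex_of_real s)"
          using ii False F2 by (simp add: A_def sum_divide_distrib)
        also have "\<dots> = (if i = i' then 1 else 0)"
          using c3[OF ii] supp ii False F2 ss t0 by auto
        finally show ?thesis using ii by (simp add: D_def diag_of_def)
      qed
    qed
    finally show "(mat_adjoint A * B) $$ (i,i') = D $$ (i,i')" .
  qed (insert Ac Dc Bc, auto)
  show ?thesis unfolding sig
    using char_poly_mult_comm[OF Bc adj_carrier[OF Ac]] AAD D_def by simp
qed




lemma mv_entry: "A \<in> carrier_mat n1 n2 \<Longrightarrow> v \<in> carrier_vec n2 \<Longrightarrow> r < n1 \<Longrightarrow>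
  (A *\<^sub>v v) $ r = (\<Sum>s<n2. A $$ (r,s) * v $ s)"
  by (simp add: scalar_prod_def atLeast0LessThan)

lemma braket_sum: "x \<in> carrier_vec d \<Longrightarrow> braket x y = (\<Sum>r<d. y $ r * cnj (x $ r))"
  unfolding braket_def by (simp add: scalar_prod_def atLeast0LessThan)

lemma braket_cnj: "x \<in> carrier_vec d \<Longrightarrow> y \<in> carrier_vec d \<Longrightarrow> braket x y = cnj (braket y x)"
  by (simp add: braket_sum mult.commute)

lemma braket_adj:
  assumes U: "U \<in> carrier_mat d d" and x: "x \<in> carrier_vec d" and y: "y \<in> carrier_vec d"
  shows "braket (U *\<^sub>v x) y = braket x (mat_adjoint U *\<^sub>v y)"
proof -
  have "braket (U *\<^sub>v x) y = (\<Sum>r<d. y $ r * cnj (\<Sum>s<d. U $$ (r,s) * x $ s))"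
    using U x by (simp add: braket_sum[of _ d] mv_entry del: index_mult_mat_vec)
  also have "\<dots> = (\<Sum>r<d. \<Sum>s<d. y $ r * cnj (U $$ (r,s)) * cnj (x $ s))"
    by (simp add: sum_distrib_left mult.assoc)
  also have "\<dots> = (\<Sum>s<d. \<Sum>r<d. y $ r * cnj (U $$ (r,s)) * cnj (x $ s))"
    by (rule sum.swap)
  also have "\<dots> = (\<Sum>s<d. (mat_adjoint U *\<^sub>v y) $ s * cnj (x $ s))"
    using U y by (simp add: mv_entry[OF adj_carrier[OF U] y] adj_entry[OF U] sum_distrib_left mult_ac del: index_mult_mat_vec)
  also have "\<dots> = braket x (mat_adjoint U *\<^sub>v y)" using x by (simp add: braket_sum[of _ d])
  finally show ?thesis .
qed

locale ons =
  fixes d m k :: nat and e :: "nat \<Rightarrow> nat \<Rightarrow> complex vec"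
  assumes ecar: "\<And>i j. i < m \<Longrightarrow> j < k \<Longrightarrow> e i j \<in> carrier_vec d"
    and eon: "\<And>i j i' j'. i < m \<Longrightarrow> j < k \<Longrightarrow> i' < m \<Longrightarrow> j' < k \<Longrightarrow>
       braket (e i j) (e i' j') = (if i = i' \<and> j = j' then 1 else 0)"
begin

definition inV :: "complex vec \<Rightarrow> bool" where
  "inV v \<longleftrightarrow> v \<in> carrier_vec d \<and> (\<forall>r<d. v $ r = (\<Sum>a<m. \<Sum>b<k. braket (e a b) v * e a b $ r))"

lemma span_inV:
  assumes "in_span_fam d e ({..<m} \<times> {..<k}) v"
  shows "inV v"
proof -
  from assms obtain c where v: "v \<in> carrier_vec d"
    and c: "\<forall>r<d. v $ r = (\<Sum>(i,j)\<in>{..<m} \<times> {..<k}. c i j * (e i j $ r))"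
    unfolding in_span_fam_def by auto
  have c': "v $ r = (\<Sum>i<m. \<Sum>j<k. c i j * (e i j $ r))" if "r < d" for r
    using c that by (simp add: sum.cartesian_product)
  have co: "braket (e a b) v = c a b" if ab: "a < m" "b < k" for a b
  proof -
    have "braket (e a b) v = (\<Sum>r<d. (\<Sum>i<m. \<Sum>j<k. c i j * (e i j $ r)) * cnj (e a b $ r))"
      using ecar[OF ab] c' by (simp add: braket_sum[of _ d])
    also have "\<dots> = (\<Sum>i<m. \<Sum>j<k. c i j * (\<Sum>r<d. e i j $ r * cnj (e a b $ r)))"
      by (simp add: sum_distrib_left sum_distrib_right mult.assoc sum.swap[of _ "{..<d}"])
    also have "\<dots> = (\<Sum>i<m. \<Sum>j<k. c i j * braket (e a b) (e i j))"
      using ecar[OF ab] by (simp add: braket_sum[of _ d])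
    also have "\<dots> = (\<Sum>i<m. \<Sum>j<k. c i j * (if a = i \<and> b = j then 1 else 0))"
      using ab eon by (intro sum.cong refl, auto)
    also have "\<dots> = (\<Sum>i<m. if a = i then c i b else 0)"
    proof (intro sum.cong refl)
      fix i show "(\<Sum>j<k. c i j * (if a = i \<and> b = j then 1 else 0)) = (if a = i then c i b else 0)"
        proof (cases "a = i")
        case True
        have "(\<Sum>j<k. c i j * (if a = i \<and> b = j then 1 else 0)) = (\<Sum>j<k. if b = j then c i j else 0)"
          using True by (intro sum.cong refl) auto
        then show ?thesis using ab True by (simp add: sum.delta)
      qed simp
    qed
    also have "\<dots> = c a b" using ab by (simp add: sum.delta)
    finally show ?thesis .
  qed
  show ?thesis unfolding inV_def using v c' co by auto
qed


lemma braket_inV: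
  assumes v: "v \<in> carrier_vec d" and w: "inV w"
  shows "braket v w = (\<Sum>a<m. \<Sum>b<k. braket (e a b) w * cnj (braket (e a b) v))"
proof -
  have "braket v w = (\<Sum>r<d. (\<Sum>a<m. \<Sum>b<k. braket (e a b) w * e a b $ r) * cnj (v $ r))"
    using v w unfolding inV_def by (simp add: braket_sum[of _ d])
  also have "\<dots> = (\<Sum>a<m. \<Sum>b<k. braket (e a b) w * (\<Sum>r<d. e a b $ r * cnj (v $ r)))"
    by (simp add: sum_distrib_left sum_distrib_right mult.assoc sum.swap[of _ "{..<d}"])
  also have "\<dots> = (\<Sum>a<m. \<Sum>b<k. braket (e a b) w * cnj (braket (e a b) v))"
  proof (intro sum.cong refl)
    fix a b assume "a \<in> {..<m}" "b \<in> {..<k}"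
    then have ab: "a < m" "b < k" by auto
    have "(\<Sum>r<d. e a b $ r * cnj (v $ r)) = braket v (e a b)" using v by (simp add: braket_sum[of _ d])
    also have "\<dots> = cnj (braket (e a b) v)" using braket_cnj[OF v ecar[OF ab]] .
    finally show "braket (e a b) w * (\<Sum>r<d. e a b $ r * cnj (v $ r)) = braket (e a b) w * cnj (braket (e a b) v)" by simp
  qed
  finally show ?thesis .
qed

lemma Mv_entry_inV:
  assumes Q: "Q \<in> carrier_mat d d" and w: "inV w" and r: "r < d"
  shows "(Q *\<^sub>v w) $ r = (\<Sum>a<m. \<Sum>b<k. braket (e a b) w * (Q *\<^sub>v e a b) $ r)"
proof -
  have wc: "w \<in> carrier_vec d" using w unfolding inV_def by auto
  have "(Q *\<^sub>v w) $ r = (\<Sum>s<d. Q $$ (r,s) * (\<Sum>a<m. \<Sum>b<k. braket (e a b) w * e a b $ s))"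
    using w r Q unfolding inV_def by (simp add: mv_entry[OF Q wc r] del: index_mult_mat_vec)
  also have "\<dots> = (\<Sum>a<m. \<Sum>b<k. braket (e a b) w * (\<Sum>s<d. Q $$ (r,s) * e a b $ s))"
    by (simp add: sum_distrib_left mult_ac sum.swap[of _ "{..<d}"])
  also have "\<dots> = (\<Sum>a<m. \<Sum>b<k. braket (e a b) w * (Q *\<^sub>v e a b) $ r)"
    using ecar Q r by (intro sum.cong refl, simp add: mv_entry[OF Q _ r] del: index_mult_mat_vec)
  finally show ?thesis .
qed

lemma Mv_inV:
  assumes Q: "Q \<in> carrier_mat d d" and w: "inV w" and v: "v \<in> carrier_vec d"
  shows "braket v (Q *\<^sub>v w) = (\<Sum>a<m. \<Sum>b<k. braket (e a b) w * braket v (Q *\<^sub>v e a b))"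
proof -
  have "braket v (Q *\<^sub>v w) = (\<Sum>r<d. (\<Sum>a<m. \<Sum>b<k. braket (e a b) w * (Q *\<^sub>v e a b) $ r) * cnj (v $ r))"
    using v by (simp add: braket_sum[of _ d] Mv_entry_inV[OF Q w] del: index_mult_mat_vec)
  also have "\<dots> = (\<Sum>a<m. \<Sum>b<k. braket (e a b) w * (\<Sum>r<d. (Q *\<^sub>v e a b) $ r * cnj (v $ r)))"
    by (simp add: sum_distrib_left sum_distrib_right mult.assoc sum.swap[of _ "{..<d}"])
  also have "\<dots> = (\<Sum>a<m. \<Sum>b<k. braket (e a b) w * braket v (Q *\<^sub>v e a b))"
    using v by (simp add: braket_sum[of _ d] del: index_mult_mat_vec)
  finally show ?thesis .
qed

lemma braket_zero: "v \<in> carrier_vec n \<Longrightarrow> braket v (0\<^sub>v n) = 0"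
  unfolding braket_def by (simp add: scalar_prod_def)

lemma mv_zero: "Q \<in> carrier_mat n n \<Longrightarrow> Q *\<^sub>v 0\<^sub>v n = 0\<^sub>v n"
  by (intro eq_vecI, auto simp: scalar_prod_def)

lemma Qb_inV:
  assumes Q: "Q \<in> carrier_mat d d"
    and QB: "\<forall>i''<m. \<forall>j<k. Q *\<^sub>v e i'' j = (if i'' = i then e i' j else 0\<^sub>v d)"
    and i: "i < m" and i': "i' < m" and w: "inV w" and v: "v \<in> carrier_vec d"
  shows "braket v (Q *\<^sub>v w) = (\<Sum>b<k. braket (e i b) w * cnj (braket (e i' b) v))"
proof -
  have "braket v (Q *\<^sub>v w) = (\<Sum>a<m. \<Sum>b<k. braket (e a b) w * braket v (Q *\<^sub>v e a b))"
    by (rule Mv_inV[OF Q w v])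
  also have "\<dots> = (\<Sum>a<m. if a = i then (\<Sum>b<k. braket (e i b) w * cnj (braket (e i' b) v)) else 0)"
  proof (intro sum.cong refl)
    fix a assume a: "a \<in> {..<m}"
    show "(\<Sum>b<k. braket (e a b) w * braket v (Q *\<^sub>v e a b)) =
      (if a = i then (\<Sum>b<k. braket (e i b) w * cnj (braket (e i' b) v)) else 0)"
    proof (cases "a = i")
      case True
      have "(\<Sum>b<k. braket (e a b) w * braket v (Q *\<^sub>v e a b)) = (\<Sum>b<k. braket (e i b) w * cnj (braket (e i' b) v))"
        using True a QB i' braket_cnj[OF v ecar[OF i']] by (intro sum.cong refl, auto)
      then show ?thesis using True by simp
    next
      case False
      then show ?thesis using a QB by (auto simp: braket_zero[OF v])
    qed
  qed
  also have "\<dots> = (\<Sum>b<k. braket (e i b) w * cnj (braket (e i' b) v))" using i by (simp add: sum.delta)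
  finally show ?thesis .
qed

lemma Qt_inV:
  assumes Q: "Q \<in> carrier_mat d d"
    and QT: "\<forall>i<m. \<forall>j''<k. Q *\<^sub>v e i j'' = (if j'' = j then e i j' else 0\<^sub>v d)"
    and j: "j < k" and j': "j' < k" and w: "inV w" and v: "v \<in> carrier_vec d"
  shows "braket v (Q *\<^sub>v w) = (\<Sum>a<m. braket (e a j) w * cnj (braket (e a j') v))"
proof -
  have "braket v (Q *\<^sub>v w) = (\<Sum>a<m. \<Sum>b<k. braket (e a b) w * braket v (Q *\<^sub>v e a b))"
    by (rule Mv_inV[OF Q w v])
  also have "\<dots> = (\<Sum>a<m. \<Sum>b<k. if b = j then braket (e a j) w * cnj (braket (e a j') v) else 0)"
  proof (intro sum.cong refl)
    fix a b assume a: "a \<in> {..<m}" and b: "b \<in> {..<k}"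
    show "braket (e a b) w * braket v (Q *\<^sub>v e a b) =
      (if b = j then braket (e a j) w * cnj (braket (e a j') v) else 0)"
      using a b QT braket_cnj[OF v ecar[of a j']] j' by (auto simp: braket_zero[OF v])
  qed
  also have "\<dots> = (\<Sum>a<m. braket (e a j) w * cnj (braket (e a j') v))" using j by (simp add: sum.delta)
  finally show ?thesis .
qed

lemma QbQt_inV:
  assumes Q1: "Q1 \<in> carrier_mat d d" and Q2: "Q2 \<in> carrier_mat d d"
    and QB: "\<forall>i''<m. \<forall>j<k. Q1 *\<^sub>v e i'' j = (if i'' = i then e i' j else 0\<^sub>v d)"
    and QT: "\<forall>i<m. \<forall>j''<k. Q2 *\<^sub>v e i j'' = (if j'' = j then e i j' else 0\<^sub>v d)"
    and i: "i < m" and i': "i' < m" and j: "j < k" and j': "j' < k" and w: "inV w" and v: "v \<in> carrier_vec d"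
  shows "braket v ((Q1 * Q2) *\<^sub>v w) = braket (e i j) w * cnj (braket (e i' j') v)"
proof -
  have "braket v ((Q1 * Q2) *\<^sub>v w) = (\<Sum>a<m. \<Sum>b<k. braket (e a b) w * braket v ((Q1 * Q2) *\<^sub>v e a b))"
    by (rule Mv_inV[OF mult_carrier_mat[OF Q1 Q2] w v])
  also have "\<dots> = (\<Sum>a<m. \<Sum>b<k. if a = i then (if b = j then braket (e i j) w * cnj (braket (e i' j') v) else 0) else 0)"
  proof (intro sum.cong refl)
    fix a b assume a: "a \<in> {..<m}" and b: "b \<in> {..<k}"
    have "(Q1 * Q2) *\<^sub>v e a b = Q1 *\<^sub>v (Q2 *\<^sub>v e a b)"
      using a b by (intro assoc_mult_mat_vec[OF Q1 Q2 ecar], auto)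
    then show "braket (e a b) w * braket v ((Q1 * Q2) *\<^sub>v e a b) =
      (if a = i then (if b = j then braket (e i j) w * cnj (braket (e i' j') v) else 0) else 0)"
      using a b QT QB j' braket_cnj[OF v ecar[OF i' j']] Q1 by (auto simp: braket_zero[OF v] mv_zero)
  qed
  also have "\<dots> = (\<Sum>a<m. if a = i then braket (e i j) w * cnj (braket (e i' j') v) else 0)"
  proof (intro sum.cong refl)
    fix a show "(\<Sum>b<k. if a = i then (if b = j then braket (e i j) w * cnj (braket (e i' j') v) else 0) else 0) =
      (if a = i then braket (e i j) w * cnj (braket (e i' j') v) else 0)"
      by (cases "a = i") (simp_all add: sum.delta j)
  qed
  also have "\<dots> = braket (e i j) w * cnj (braket (e i' j') v)" using i by (simp add: sum.delta)
  finally show ?thesis .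
qed

end



locale phys = ons d m k e for d m k e +
  fixes Ab At :: "complex mat set" and U :: "complex mat"
  assumes Ab_alg: "op_algebra d Ab"
    and At_alg: "op_algebra d At"
    and commute: "\<forall>X\<in>Ab. \<forall>Y\<in>At. X * Y = Y * X"
    and U_unitary: "unitary_mat d U"
    and U_loc_b: "\<forall>X\<in>Ab. mat_adjoint U * X * U \<in> Ab \<and> U * X * mat_adjoint U \<in> Ab"
    and U_loc_t: "\<forall>X\<in>At. mat_adjoint U * X * U \<in> At \<and> U * X * mat_adjoint U \<in> At"
    and A1_b: "\<forall>i<m. \<forall>i'<m. \<exists>Q\<in>Ab. \<forall>i''<m. \<forall>j<k.
          Q *\<^sub>v e i'' j = (if i'' = i then e i' j else 0\<^sub>v d)"
    and A1_t: "\<forall>j<k. \<forall>j'<k. \<exists>Q\<in>At. \<forall>i<m. \<forall>j''<k.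
          Q *\<^sub>v e i j'' = (if j'' = j then e i j' else 0\<^sub>v d)"
    and A2: "\<forall>i<m. \<forall>j<k. \<forall>Ob\<in>Ab. \<forall>Ot\<in>At.
          braket (e i j) (Ob * Ot *\<^sub>v e i j)
            = braket (e i j) (Ob *\<^sub>v e i j) * braket (e i j) (Ot *\<^sub>v e i j)"
begin

lemma Uc: "U \<in> carrier_mat d d" and UUa: "U * mat_adjoint U = 1\<^sub>m d" and UaU: "mat_adjoint U * U = 1\<^sub>m d"
  using U_unitary unfolding unitary_mat_def by auto

lemma Uac: "mat_adjoint U \<in> carrier_mat d d" using adj_carrier[OF Uc] .

lemma Abc: "X \<in> Ab \<Longrightarrow> X \<in> carrier_mat d d" using Ab_alg unfolding op_algebra_def by auto
lemma Atc: "X \<in> At \<Longrightarrow> X \<in> carrier_mat d d" using At_alg unfolding op_algebra_def by auto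
lemma Ab_mult: "X \<in> Ab \<Longrightarrow> Y \<in> Ab \<Longrightarrow> X * Y \<in> Ab" using Ab_alg unfolding op_algebra_def by auto
lemma At_mult: "X \<in> At \<Longrightarrow> Y \<in> At \<Longrightarrow> X * Y \<in> At" using At_alg unfolding op_algebra_def by auto
lemma Ab_adj: "X \<in> Ab \<Longrightarrow> mat_adjoint X \<in> Ab" using Ab_alg unfolding op_algebra_def by auto
lemma At_adj: "X \<in> At \<Longrightarrow> mat_adjoint X \<in> At" using At_alg unfolding op_algebra_def by auto

lemma mult_dd[simp]: "A \<in> carrier_mat d d \<Longrightarrow> B \<in> carrier_mat d d \<Longrightarrow> A * B \<in> carrier_mat d d"
  by auto
lemma adj_dd[simp]: "A \<in> carrier_mat d d \<Longrightarrow> mat_adjoint A \<in> carrier_mat d d"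
  by auto
lemma mv_dd[simp]: "A \<in> carrier_mat d d \<Longrightarrow> v \<in> carrier_vec d \<Longrightarrow> A *\<^sub>v v \<in> carrier_vec d"
  by auto

lemma braket_M: "M \<in> carrier_mat d d \<Longrightarrow> x \<in> carrier_vec d \<Longrightarrow>
  braket (M *\<^sub>v x) (M *\<^sub>v x) = braket x ((mat_adjoint M * M) *\<^sub>v x)"
  by (simp add: braket_adj assoc_mult_mat_vec[of _ d d _ d])

lemma braket_conjM: "M \<in> carrier_mat d d \<Longrightarrow> N \<in> carrier_mat d d \<Longrightarrow> x \<in> carrier_vec d \<Longrightarrow>
  braket (M *\<^sub>v x) (N *\<^sub>v (M *\<^sub>v x)) = braket x ((mat_adjoint M * N * M) *\<^sub>v x)"
  by (simp add: braket_adj assoc_mult_mat_vec[of _ d d _ d])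

lemma braket_U: "x \<in> carrier_vec d \<Longrightarrow> y \<in> carrier_vec d \<Longrightarrow> braket (U *\<^sub>v x) (U *\<^sub>v y) = braket x y"
  using Uc Uac UaU by (simp add: braket_adj assoc_mult_mat_vec[of _ d d _ d, symmetric])

lemma conj_prod: "X \<in> carrier_mat d d \<Longrightarrow> Y \<in> carrier_mat d d \<Longrightarrow>
  mat_adjoint U * (X * Y) * U = (mat_adjoint U * X * U) * (mat_adjoint U * Y * U)"
proof -
  assume X: "X \<in> carrier_mat d d" and Y: "Y \<in> carrier_mat d d"
  have "(mat_adjoint U * X * U) * (mat_adjoint U * Y * U) = mat_adjoint U * X * (U * mat_adjoint U) * Y * U"
    using X Y Uc Uac by (simp add: assoc_mult_mat[of _ d d _ d _ d])
  also have "\<dots> = mat_adjoint U * (X * Y) * U"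
    using X Y Uc Uac UUa by (simp add: assoc_mult_mat[of _ d d _ d _ d])
  finally show ?thesis by simp
qed

lemma fact_psi:
  assumes i: "i < m" and j: "j < k" and X: "X \<in> Ab" and Y: "Y \<in> At"
  shows "braket (U *\<^sub>v e i j) ((X * Y) *\<^sub>v (U *\<^sub>v e i j)) =
    braket (U *\<^sub>v e i j) (X *\<^sub>v (U *\<^sub>v e i j)) * braket (U *\<^sub>v e i j) (Y *\<^sub>v (U *\<^sub>v e i j))"
proof -
  have ec: "e i j \<in> carrier_vec d" using ecar[OF i j] .
  have Xc: "X \<in> carrier_mat d d" using Abc[OF X] .
  have Yc: "Y \<in> carrier_mat d d" using Atc[OF Y] .
  have "braket (U *\<^sub>v e i j) ((X * Y) *\<^sub>v (U *\<^sub>v e i j)) = braket (e i j) ((mat_adjoint U * (X * Y) * U) *\<^sub>v e i j)"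
    using Xc Yc by (intro braket_conjM[OF Uc _ ec], auto)
  also have "\<dots> = braket (e i j) ((mat_adjoint U * X * U) * (mat_adjoint U * Y * U) *\<^sub>v e i j)"
    using conj_prod[OF Xc Yc] by simp
  also have "\<dots> = braket (e i j) ((mat_adjoint U * X * U) *\<^sub>v e i j) * braket (e i j) ((mat_adjoint U * Y * U) *\<^sub>v e i j)"
    using A2 i j U_loc_b U_loc_t X Y by auto
  also have "\<dots> = braket (U *\<^sub>v e i j) (X *\<^sub>v (U *\<^sub>v e i j)) * braket (U *\<^sub>v e i j) (Y *\<^sub>v (U *\<^sub>v e i j))"
    using braket_conjM[OF Uc Xc ec] braket_conjM[OF Uc Yc ec] by simp
  finally show ?thesis .
qed


definition Rb :: "complex vec \<Rightarrow> nat \<Rightarrow> nat \<Rightarrow> complex" where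
  "Rb \<psi> a a' = (\<Sum>b<k. braket (e a b) \<psi> * cnj (braket (e a' b) \<psi>))"
definition Rt :: "complex vec \<Rightarrow> nat \<Rightarrow> nat \<Rightarrow> complex" where
  "Rt \<psi> b b' = (\<Sum>a<m. braket (e a b) \<psi> * cnj (braket (e a b') \<psi>))"

lemma inV_carrier: "inV v \<Longrightarrow> v \<in> carrier_vec d" unfolding inV_def by auto

lemma fac:
  assumes i: "i < m" and j: "j < k" and V: "inV (U *\<^sub>v e i j)"
    and a: "a < m" and a': "a' < m" and b: "b < k" and b': "b' < k"
  shows "braket (e a b) (U *\<^sub>v e i j) * cnj (braket (e a' b') (U *\<^sub>v e i j))
     = Rb (U *\<^sub>v e i j) a a' * Rt (U *\<^sub>v e i j) b b'"
proof -
  let ?p = "U *\<^sub>v e i j"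
  have pc: "?p \<in> carrier_vec d" using inV_carrier[OF V] .
  obtain Q1 where Q1: "Q1 \<in> Ab" "\<forall>i''<m. \<forall>j<k. Q1 *\<^sub>v e i'' j = (if i'' = a then e a' j else 0\<^sub>v d)"
    using A1_b a a' by blast
  obtain Q2 where Q2: "Q2 \<in> At" "\<forall>i<m. \<forall>j''<k. Q2 *\<^sub>v e i j'' = (if j'' = b then e i b' else 0\<^sub>v d)"
    using A1_t b b' by blast
  have "braket (e a b) ?p * cnj (braket (e a' b') ?p) = braket ?p ((Q1 * Q2) *\<^sub>v ?p)"
    by (rule QbQt_inV[OF Abc[OF Q1(1)] Atc[OF Q2(1)] Q1(2) Q2(2) a a' b b' V pc, symmetric])
  also have "\<dots> = braket ?p (Q1 *\<^sub>v ?p) * braket ?p (Q2 *\<^sub>v ?p)"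
    by (rule fact_psi[OF i j Q1(1) Q2(1)])
  also have "braket ?p (Q1 *\<^sub>v ?p) = Rb ?p a a'"
    unfolding Rb_def by (rule Qb_inV[OF Abc[OF Q1(1)] Q1(2) a a' V pc])
  also have "braket ?p (Q2 *\<^sub>v ?p) = Rt ?p b b'"
    unfolding Rt_def by (rule Qt_inV[OF Atc[OF Q2(1)] Q2(2) b b' V pc])
  finally show ?thesis .
qed

lemma norm_psi: "i < m \<Longrightarrow> j < k \<Longrightarrow> braket (U *\<^sub>v e i j) (U *\<^sub>v e i j) = 1"
  using braket_U[OF ecar ecar] eon by auto

lemma Rb_inv:
  assumes i: "i < m" and j: "j < k" and j': "j' < k"
    and V: "inV (U *\<^sub>v e i j)" and V': "inV (U *\<^sub>v e i j')"
    and a: "a < m" and a': "a' < m"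
  shows "Rb (U *\<^sub>v e i j') a a' = Rb (U *\<^sub>v e i j) a a'"
proof -
  let ?p = "U *\<^sub>v e i j" and ?q = "U *\<^sub>v e i j'"
  have pc: "?p \<in> carrier_vec d" using inV_carrier[OF V] .
  have qc: "?q \<in> carrier_vec d" using inV_carrier[OF V'] .
  have ec: "e i j \<in> carrier_vec d" using ecar[OF i j] .
  obtain Qt where Qt: "Qt \<in> At" "\<forall>i<m. \<forall>j''<k. Qt *\<^sub>v e i j'' = (if j'' = j then e i j' else 0\<^sub>v d)"
    using A1_t j j' by blast
  obtain X where X: "X \<in> Ab" "\<forall>i''<m. \<forall>j<k. X *\<^sub>v e i'' j = (if i'' = a then e a' j else 0\<^sub>v d)"
    using A1_b a a' by blast
  define Y where "Y = U * Qt * mat_adjoint U"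
  have Y: "Y \<in> At" unfolding Y_def using U_loc_t Qt(1) by auto
  have Yc: "Y \<in> carrier_mat d d" using Atc[OF Y] .
  have Xc: "X \<in> carrier_mat d d" using Abc[OF X(1)] .
  have Qtc: "Qt \<in> carrier_mat d d" using Atc[OF Qt(1)] .
  have Yp: "Y *\<^sub>v ?p = ?q"
  proof -
    have "Y *\<^sub>v ?p = U *\<^sub>v (Qt *\<^sub>v ((mat_adjoint U * U) *\<^sub>v e i j))"
      unfolding Y_def using Uc Qtc ec by (simp add: assoc_mult_mat_vec[of _ d d _ d])
    also have "\<dots> = ?q" using UaU ec Qt(2) i j by simp
    finally show ?thesis .
  qed
  have YY: "mat_adjoint Y * Y \<in> At" using At_mult[OF At_adj[OF Y] Y] .
  have comm1: "X * Y = Y * X" using commute X(1) Y by auto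
  have comm2: "X * (mat_adjoint Y * Y) = (mat_adjoint Y * Y) * X" using commute X(1) YY by auto
  have "Rb ?q a a' = braket ?q (X *\<^sub>v ?q)"
    unfolding Rb_def by (rule Qb_inV[OF Xc X(2) a a' V' qc, symmetric])
  also have "\<dots> = braket (Y *\<^sub>v ?p) (X *\<^sub>v (Y *\<^sub>v ?p))" using Yp by simp
  also have "\<dots> = braket ?p ((mat_adjoint Y * X * Y) *\<^sub>v ?p)" by (rule braket_conjM[OF Yc Xc pc])
  also have "mat_adjoint Y * X * Y = X * (mat_adjoint Y * Y)"
  proof -
    have "mat_adjoint Y * X * Y = mat_adjoint Y * (Y * X)"
      using Yc Xc comm1 by (simp add: assoc_mult_mat[of _ d d _ d _ d])
    also have "\<dots> = (mat_adjoint Y * Y) * X"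
      using Yc Xc by (simp add: assoc_mult_mat[of _ d d _ d _ d])
    finally show ?thesis using comm2 by simp
  qed
  also have "braket ?p ((X * (mat_adjoint Y * Y)) *\<^sub>v ?p) = braket ?p (X *\<^sub>v ?p) * braket ?p ((mat_adjoint Y * Y) *\<^sub>v ?p)"
    by (rule fact_psi[OF i j X(1) YY])
  also have "braket ?p ((mat_adjoint Y * Y) *\<^sub>v ?p) = braket ?q ?q"
    using braket_M[OF Yc pc] Yp by simp
  also have "braket ?q ?q = 1" using norm_psi[OF i j'] .
  also have "braket ?p (X *\<^sub>v ?p) = Rb ?p a a'"
    unfolding Rb_def by (rule Qb_inV[OF Xc X(2) a a' V pc])
  finally show ?thesis by simp
qed

lemma Rt_inv:
  assumes i: "i < m" and i': "i' < m" and j: "j < k"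
    and V: "inV (U *\<^sub>v e i j)" and V': "inV (U *\<^sub>v e i' j)"
    and b: "b < k" and b': "b' < k"
  shows "Rt (U *\<^sub>v e i' j) b b' = Rt (U *\<^sub>v e i j) b b'"
proof -
  let ?p = "U *\<^sub>v e i j" and ?q = "U *\<^sub>v e i' j"
  have pc: "?p \<in> carrier_vec d" using inV_carrier[OF V] .
  have qc: "?q \<in> carrier_vec d" using inV_carrier[OF V'] .
  have ec: "e i j \<in> carrier_vec d" using ecar[OF i j] .
  obtain Qb where Qb: "Qb \<in> Ab" "\<forall>i''<m. \<forall>j<k. Qb *\<^sub>v e i'' j = (if i'' = i then e i' j else 0\<^sub>v d)"
    using A1_b i i' by blast
  obtain Y where Y: "Y \<in> At" "\<forall>i<m. \<forall>j''<k. Y *\<^sub>v e i j'' = (if j'' = b then e i b' else 0\<^sub>v d)"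
    using A1_t b b' by blast
  define X where "X = U * Qb * mat_adjoint U"
  have X: "X \<in> Ab" unfolding X_def using U_loc_b Qb(1) by auto
  have Yc: "Y \<in> carrier_mat d d" using Atc[OF Y(1)] .
  have Xc: "X \<in> carrier_mat d d" using Abc[OF X] .
  have Qbc: "Qb \<in> carrier_mat d d" using Abc[OF Qb(1)] .
  have Xp: "X *\<^sub>v ?p = ?q"
  proof -
    have "X *\<^sub>v ?p = U *\<^sub>v (Qb *\<^sub>v ((mat_adjoint U * U) *\<^sub>v e i j))"
      unfolding X_def using Uc Qbc ec by (simp add: assoc_mult_mat_vec[of _ d d _ d])
    also have "\<dots> = ?q" using UaU ec Qb(2) i j by simp
    finally show ?thesis .
  qed
  have XX: "mat_adjoint X * X \<in> Ab" using Ab_mult[OF Ab_adj[OF X] X] .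
  have comm1: "X * Y = Y * X" using commute X Y(1) by auto
  have "Rt ?q b b' = braket ?q (Y *\<^sub>v ?q)"
    unfolding Rt_def by (rule Qt_inV[OF Yc Y(2) b b' V' qc, symmetric])
  also have "\<dots> = braket (X *\<^sub>v ?p) (Y *\<^sub>v (X *\<^sub>v ?p))" using Xp by simp
  also have "\<dots> = braket ?p ((mat_adjoint X * Y * X) *\<^sub>v ?p)" by (rule braket_conjM[OF Xc Yc pc])
  also have "mat_adjoint X * Y * X = (mat_adjoint X * X) * Y"
  proof -
    have "mat_adjoint X * Y * X = mat_adjoint X * (X * Y)"
      using Yc Xc comm1 by (simp add: assoc_mult_mat[of _ d d _ d _ d])
    also have "\<dots> = (mat_adjoint X * X) * Y"
      using Yc Xc by (simp add: assoc_mult_mat[of _ d d _ d _ d])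
    finally show ?thesis .
  qed
  also have "braket ?p (((mat_adjoint X * X) * Y) *\<^sub>v ?p) = braket ?p ((mat_adjoint X * X) *\<^sub>v ?p) * braket ?p (Y *\<^sub>v ?p)"
    by (rule fact_psi[OF i j XX Y(1)])
  also have "braket ?p ((mat_adjoint X * X) *\<^sub>v ?p) = braket ?q ?q"
    using braket_M[OF Xc pc] Xp by simp
  also have "braket ?q ?q = 1" using norm_psi[OF i' j] .
  also have "braket ?p (Y *\<^sub>v ?p) = Rt ?p b b'"
    unfolding Rt_def by (rule Qt_inV[OF Yc Y(2) b b' V pc])
  finally show ?thesis by simp
qed

end



lemma reorder6:
  "(\<Sum>i\<in>I. \<Sum>j\<in>J. \<Sum>a\<in>A. \<Sum>b\<in>B. \<Sum>a'\<in>A. \<Sum>b'\<in>B. F i j a b a' b') =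
   (\<Sum>a\<in>A. \<Sum>b\<in>B. \<Sum>a'\<in>A. \<Sum>b'\<in>B. \<Sum>i\<in>I. \<Sum>j\<in>J. F i j a b a' b')"
  apply (simp only: sum.swap[of _ I])
  apply (simp only: sum.swap[of _ J])
  done

lemma reorder3:
  "(\<Sum>s\<in>S. \<Sum>a\<in>A. \<Sum>b\<in>B. F s a b) = (\<Sum>a\<in>A. \<Sum>b\<in>B. \<Sum>s\<in>S. F s a b)"
  by (simp only: sum.swap[of _ S])

lemma ketbra_entry: "r < d \<Longrightarrow> c < d \<Longrightarrow> ketbra d x y $$ (r,c) = x $ r * cnj (y $ c)"
  unfolding ketbra_def by simp

context ons begin

lemma prod_op_entry:
  assumes r: "r < d" and c: "c < d"
  shows "prod_op d e m k A B $$ (r,c) =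
    (\<Sum>a<m. \<Sum>b<k. e a b $ r * (\<Sum>a'<m. \<Sum>b'<k. A $$ (a,a') * B $$ (b,b') * cnj (e a' b' $ c)))"
proof -
  have "prod_op d e m k A B $$ (r,c) = (\<Sum>a<m. \<Sum>a'<m. \<Sum>b<k. \<Sum>b'<k. e a b $ r * (A $$ (a,a') * B $$ (b,b') * cnj (e a' b' $ c)))"
    unfolding prod_op_def using r c by (simp add: ketbra_entry mult_ac)
  also have "\<dots> = (\<Sum>a<m. \<Sum>b<k. \<Sum>a'<m. \<Sum>b'<k. e a b $ r * (A $$ (a,a') * B $$ (b,b') * cnj (e a' b' $ c)))"
    by (rule sum.cong[OF refl], rule sum.swap)
  also have "\<dots> = (\<Sum>a<m. \<Sum>b<k. e a b $ r * (\<Sum>a'<m. \<Sum>b'<k. A $$ (a,a') * B $$ (b,b') * cnj (e a' b' $ c)))"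
    by (simp add: sum_distrib_left)
  finally show ?thesis .
qed

lemma prod_op_carrier: "prod_op d e m k A B \<in> carrier_mat d d"
  unfolding prod_op_def by simp

lemma prod_op_span:
  assumes v: "v \<in> carrier_vec d"
  shows "in_span_fam d e ({..<m} \<times> {..<k}) (prod_op d e m k A B *\<^sub>v v)"
proof -
  define K where "K a b s = (\<Sum>a'<m. \<Sum>b'<k. A $$ (a,a') * B $$ (b,b') * cnj (e a' b' $ s))" for a b s
  define c where "c a b = (\<Sum>s<d. K a b s * v $ s)" for a b
  have "(prod_op d e m k A B *\<^sub>v v) $ r = (\<Sum>(i,j)\<in>{..<m} \<times> {..<k}. c i j * (e i j $ r))" if r: "r < d" for r
  proof -
    have "(prod_op d e m k A B *\<^sub>v v) $ r = (\<Sum>s<d. prod_op d e m k A B $$ (r,s) * v $ s)"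
      by (rule mv_entry[OF prod_op_carrier v r])
    also have "\<dots> = (\<Sum>s<d. \<Sum>a<m. \<Sum>b<k. e a b $ r * (K a b s * v $ s))"
      using r by (simp add: prod_op_entry K_def sum_distrib_right mult.assoc)
    also have "\<dots> = (\<Sum>a<m. \<Sum>b<k. \<Sum>s<d. e a b $ r * (K a b s * v $ s))"
      by (rule reorder3)
    also have "\<dots> = (\<Sum>a<m. \<Sum>b<k. c a b * e a b $ r)"
      by (simp add: c_def sum_distrib_left sum_distrib_right mult_ac)
    also have "\<dots> = (\<Sum>(i,j)\<in>{..<m} \<times> {..<k}. c i j * (e i j $ r))"
      by (simp add: sum.cartesian_product)
    finally show ?thesis .
  qed
  then show ?thesis unfolding in_span_fam_def using mult_mat_vec_carrier[OF prod_op_carrier v] by auto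
qed

lemma diag_prod_op:
  assumes s: "s < d" and t: "t < d"
  shows "prod_op d e m k (diag_of m pb) (diag_of k pt) $$ (s,t)
    = (\<Sum>i<m. \<Sum>j<k. complex_of_real (pb i) * complex_of_real (pt j) * (e i j $ s * cnj (e i j $ t)))"
proof -
  have "prod_op d e m k (diag_of m pb) (diag_of k pt) $$ (s,t) =
    (\<Sum>i<m. \<Sum>i'<m. \<Sum>j<k. \<Sum>j'<k. (if i = i' then complex_of_real (pb i) else 0) * (if j = j' then complex_of_real (pt j) else 0) * (e i j $ s * cnj (e i' j' $ t)))"
    unfolding prod_op_def diag_of_def using s t
    by (intro trans[OF index_mat(1)] sum.cong refl) (auto simp: ketbra_entry)
  also have "\<dots> = (\<Sum>i<m. \<Sum>j<k. complex_of_real (pb i) * complex_of_real (pt j) * (e i j $ s * cnj (e i j $ t)))"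
  proof (rule sum.cong[OF refl])
    fix i assume i: "i \<in> {..<m}"
    have "(\<Sum>i'<m. \<Sum>j<k. \<Sum>j'<k. (if i = i' then complex_of_real (pb i) else 0) * (if j = j' then complex_of_real (pt j) else 0) * (e i j $ s * cnj (e i' j' $ t)))
      = (\<Sum>i'<m. if i = i' then (\<Sum>j<k. \<Sum>j'<k. complex_of_real (pb i) * (if j = j' then complex_of_real (pt j) else 0) * (e i j $ s * cnj (e i j' $ t))) else 0)"
      by (intro sum.cong refl) auto
    also have "\<dots> = (\<Sum>j<k. \<Sum>j'<k. complex_of_real (pb i) * (if j = j' then complex_of_real (pt j) else 0) * (e i j $ s * cnj (e i j' $ t)))"
      using i by (simp add: sum.delta)
    also have "\<dots> = (\<Sum>j<k. complex_of_real (pb i) * complex_of_real (pt j) * (e i j $ s * cnj (e i j $ t)))"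
    proof (rule sum.cong[OF refl])
      fix j assume j: "j \<in> {..<k}"
      have "(\<Sum>j'<k. complex_of_real (pb i) * (if j = j' then complex_of_real (pt j) else 0) * (e i j $ s * cnj (e i j' $ t)))
        = (\<Sum>j'<k. if j = j' then complex_of_real (pb i) * complex_of_real (pt j) * (e i j $ s * cnj (e i j $ t)) else 0)"
        by (intro sum.cong refl) auto
      also have "\<dots> = complex_of_real (pb i) * complex_of_real (pt j) * (e i j $ s * cnj (e i j $ t))"
        using j by (simp add: sum.delta)
      finally show "(\<Sum>j'<k. complex_of_real (pb i) * (if j = j' then complex_of_real (pt j) else 0) * (e i j $ s * cnj (e i j' $ t)))
        = complex_of_real (pb i) * complex_of_real (pt j) * (e i j $ s * cnj (e i j $ t))" .
    qed
    finally show "(\<Sum>i'<m. \<Sum>j<k. \<Sum>j'<k. (if i = i' then complex_of_real (pb i) else 0) * (if j = j' then complex_of_real (pt j) else 0) * (e i j $ s * cnj (e i' j' $ t)))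
      = (\<Sum>j<k. complex_of_real (pb i) * complex_of_real (pt j) * (e i j $ s * cnj (e i j $ t)))" .
  qed
  finally show ?thesis .
qed

end

lemma conj_sum_mat:
  fixes U :: "complex mat" and w :: "nat \<Rightarrow> nat \<Rightarrow> complex" and f :: "nat \<Rightarrow> nat \<Rightarrow> complex vec"
  assumes U: "U \<in> carrier_mat d d" and P: "P \<in> carrier_mat d d" and f: "\<And>i j. i < m \<Longrightarrow> j < k \<Longrightarrow> f i j \<in> carrier_vec d"
    and Pe: "\<And>s t. s < d \<Longrightarrow> t < d \<Longrightarrow> P $$ (s,t) = (\<Sum>i<m. \<Sum>j<k. w i j * (f i j $ s * cnj (f i j $ t)))"
    and r: "r < d" and c: "c < d"
  shows "(U * P * mat_adjoint U) $$ (r,c) = (\<Sum>i<m. \<Sum>j<k. w i j * ((U *\<^sub>v f i j) $ r * cnj ((U *\<^sub>v f i j) $ c)))"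
proof -
  have UP: "(U * P) $$ (r,t) = (\<Sum>i<m. \<Sum>j<k. w i j * ((U *\<^sub>v f i j) $ r * cnj (f i j $ t)))" if t: "t < d" for t
  proof -
    have "(U * P) $$ (r,t) = (\<Sum>s<d. U $$ (r,s) * P $$ (s,t))" by (rule mult_entry[OF U P r t])
    also have "\<dots> = (\<Sum>s<d. \<Sum>i<m. \<Sum>j<k. w i j * (U $$ (r,s) * f i j $ s * cnj (f i j $ t)))"
      using t by (simp add: Pe sum_distrib_left mult_ac)
    also have "\<dots> = (\<Sum>i<m. \<Sum>j<k. \<Sum>s<d. w i j * (U $$ (r,s) * f i j $ s * cnj (f i j $ t)))"
      by (rule reorder3)
    also have "\<dots> = (\<Sum>i<m. \<Sum>j<k. w i j * ((U *\<^sub>v f i j) $ r * cnj (f i j $ t)))"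
      using f by (intro sum.cong refl, simp add: mv_entry[OF U _ r] sum_distrib_left sum_distrib_right mult_ac del: index_mult_mat_vec)
    finally show ?thesis .
  qed
  have "(U * P * mat_adjoint U) $$ (r,c) = (\<Sum>t<d. (U * P) $$ (r,t) * mat_adjoint U $$ (t,c))"
    by (rule mult_entry[OF mult_carrier_mat[OF U P] adj_carrier[OF U] r c])
  also have "\<dots> = (\<Sum>t<d. \<Sum>i<m. \<Sum>j<k. w i j * ((U *\<^sub>v f i j) $ r * (cnj (f i j $ t) * cnj (U $$ (c,t)))))"
    using c by (simp add: UP adj_entry[OF U] sum_distrib_left sum_distrib_right mult_ac)
  also have "\<dots> = (\<Sum>i<m. \<Sum>j<k. \<Sum>t<d. w i j * ((U *\<^sub>v f i j) $ r * (cnj (f i j $ t) * cnj (U $$ (c,t)))))"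
    by (rule reorder3)
  also have "\<dots> = (\<Sum>i<m. \<Sum>j<k. w i j * ((U *\<^sub>v f i j) $ r * cnj ((U *\<^sub>v f i j) $ c)))"
    using f by (intro sum.cong refl, simp add: mv_entry[OF U _ c] sum_distrib_left sum_distrib_right mult_ac del: index_mult_mat_vec)
  finally show ?thesis .
qed







theorem mainTheorem4:
  fixes d m k :: nat
    and e :: "nat \<Rightarrow> nat \<Rightarrow> complex vec"
    and \<epsilon>b \<epsilon>t :: "nat \<Rightarrow> real"
    and \<Omega>b \<Omega>t :: nat
    and Ab At :: "complex mat set"
    and U :: "complex mat"
    and \<delta> :: real
    and pb pt :: "nat \<Rightarrow> real"
  assumes e_carrier: "\<forall>i<m. \<forall>j<k. e i j \<in> carrier_vec d"
    and e_orthonormal: "\<forall>i<m. \<forall>j<k. \<forall>i'<m. \<forall>j'<k.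
          braket (e i j) (e i' j') = (if i = i' \<and> j = j' then 1 else 0)"
    and \<Omega>_mem: "\<Omega>b < m" "\<Omega>t < k"
    and \<Omega>_zero: "\<epsilon>b \<Omega>b = 0" "\<epsilon>t \<Omega>t = 0"
    and \<epsilon>_nonneg: "\<forall>i<m. 0 \<le> \<epsilon>b i" "\<forall>j<k. 0 \<le> \<epsilon>t j"
    and Ab_alg: "op_algebra d Ab"
    and At_alg: "op_algebra d At"
    and commute: "\<forall>X\<in>Ab. \<forall>Y\<in>At. X * Y = Y * X"
    and U_unitary: "unitary_mat d U"
    and U_loc_b: "\<forall>X\<in>Ab. mat_adjoint U * X * U \<in> Ab \<and> U * X * mat_adjoint U \<in> Ab"
    and U_loc_t: "\<forall>X\<in>At. mat_adjoint U * X * U \<in> At \<and> U * X * mat_adjoint U \<in> At"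
    and A1_b: "\<forall>i<m. \<forall>i'<m. \<exists>Q\<in>Ab. \<forall>i''<m. \<forall>j<k.
          Q *\<^sub>v e i'' j = (if i'' = i then e i' j else 0\<^sub>v d)"
    and A1_t: "\<forall>j<k. \<forall>j'<k. \<exists>Q\<in>At. \<forall>i<m. \<forall>j''<k.
          Q *\<^sub>v e i j'' = (if j'' = j then e i j' else 0\<^sub>v d)"
    and A2: "\<forall>i<m. \<forall>j<k. \<forall>Ob\<in>Ab. \<forall>Ot\<in>At.
          braket (e i j) (Ob * Ot *\<^sub>v e i j)
            = braket (e i j) (Ob *\<^sub>v e i j) * braket (e i j) (Ot *\<^sub>v e i j)"
    and \<delta>_pos: "\<delta> > 0"
    and A3: "\<forall>v. in_span_fam d e {(i,j). i < m \<and> j < k \<and> \<epsilon>b i \<le> \<delta> \<and> \<epsilon>t j \<le> \<delta>} v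
          \<longrightarrow> in_span_fam d e ({..<m} \<times> {..<k}) (U *\<^sub>v v)"
    and pb_prob: "\<forall>i<m. 0 \<le> pb i" "(\<Sum>i<m. pb i) = 1"
    and pt_prob: "\<forall>j<k. 0 \<le> pt j" "(\<Sum>j<k. pt j) = 1"
    and pb_supp: "\<forall>i<m. \<delta> < \<epsilon>b i \<longrightarrow> pb i = 0"
    and pt_supp: "\<forall>j<k. \<delta> < \<epsilon>t j \<longrightarrow> pt j = 0"
  shows "(\<forall>v\<in>carrier_vec d.
            in_span_fam d e ({..<m} \<times> {..<k})
              ((U * prod_op d e m k (diag_of m pb) (diag_of k pt) * mat_adjoint U) *\<^sub>v v))
       \<and> (\<exists>\<sigma>b \<sigma>t. \<sigma>b \<in> carrier_mat m m \<and> \<sigma>t \<in> carrier_mat k k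
            \<and> hermitian_mat \<sigma>b \<and> hermitian_mat \<sigma>t
            \<and> U * prod_op d e m k (diag_of m pb) (diag_of k pt) * mat_adjoint U
                = prod_op d e m k \<sigma>b \<sigma>t
            \<and> spec_mset \<sigma>b = spec_mset (diag_of m pb)
            \<and> spec_mset \<sigma>t = spec_mset (diag_of k pt))"
  
proof -
  have ph: "phys d m k e Ab At U"
    unfolding phys_def phys_axioms_def ons_def
    using e_carrier e_orthonormal Ab_alg At_alg commute U_unitary U_loc_b U_loc_t A1_b A1_t A2
    by blast
  interpret phys d m k e Ab At U by (rule ph)
  define Good where "Good i j \<longleftrightarrow> i < m \<and> j < k \<and> \<epsilon>b i \<le> \<delta> \<and> \<epsilon>t j \<le> \<delta>" for i j
  define \<psi> where "\<psi> i j = U *\<^sub>v e i j" for i j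
  have goodV: "inV (\<psi> i j)" if g: "Good i j" for i j
  proof -
    have ij: "i < m" "j < k" using g unfolding Good_def by auto
    let ?S = "{(i,j). i < m \<and> j < k \<and> \<epsilon>b i \<le> \<delta> \<and> \<epsilon>t j \<le> \<delta>}"
    have fin: "finite ?S" by (rule finite_subset[of _ "{..<m} \<times> {..<k}"]) auto
    have mem: "(i,j) \<in> ?S" using g unfolding Good_def by auto
    have "in_span_fam d e ?S (e i j)"
      unfolding in_span_fam_def
    proof (intro conjI exI allI impI)
      show "e i j \<in> carrier_vec d" using e_carrier ij by auto
      fix r assume r: "r < d"
      have "(\<Sum>(a,b)\<in>?S. (if a = i \<and> b = j then 1 else 0) * (e a b $ r))
         = (\<Sum>x\<in>?S. if x = (i,j) then e i j $ r else 0)"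
        by (intro sum.cong refl) (auto split: if_splits)
      also have "\<dots> = e i j $ r" using fin mem by (simp add: sum.delta')
      finally show "e i j $ r = (\<Sum>(a,b)\<in>?S. (if a = i \<and> b = j then 1 else 0) * (e a b $ r))" by simp
    qed
    then show ?thesis unfolding \<psi>_def using A3 span_inV by blast
  qed
  have goodO: "Good \<Omega>b \<Omega>t" unfolding Good_def using \<Omega>_mem \<Omega>_zero \<delta>_pos by auto
  have goodsupp: "Good i j" if "i < m" "j < k" "pb i \<noteq> 0" "pt j \<noteq> 0" for i j
    unfolding Good_def using that pb_supp pt_supp by force
  have goodb: "Good i \<Omega>t" if "i < m" "pb i \<noteq> 0" for i
    unfolding Good_def using that pb_supp \<Omega>_mem \<Omega>_zero \<delta>_pos by force
  have goodt: "Good \<Omega>b j" if "j < k" "pt j \<noteq> 0" for j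
    unfolding Good_def using that pt_supp \<Omega>_mem \<Omega>_zero \<delta>_pos by force
  have Gm: "i < m" "j < k" if "Good i j" for i j using that unfolding Good_def by auto
  define \<sigma>b where "\<sigma>b = mat m m (\<lambda>(a,a'). \<Sum>i<m. complex_of_real (pb i) * Rb (\<psi> i \<Omega>t) a a')"
  define \<sigma>t where "\<sigma>t = mat k k (\<lambda>(b,b'). \<Sum>j<k. complex_of_real (pt j) * Rt (\<psi> \<Omega>b j) b b')"
  define P where "P = prod_op d e m k (diag_of m pb) (diag_of k pt)"
  have trm: "complex_of_real (pb i) * complex_of_real (pt j) * ((\<psi> i j) $ r * cnj ((\<psi> i j) $ c))
     = (\<Sum>a<m. \<Sum>b<k. \<Sum>a'<m. \<Sum>b'<k. complex_of_real (pb i) * complex_of_real (pt j) *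
          (Rb (\<psi> i \<Omega>t) a a' * Rt (\<psi> \<Omega>b j) b b' * (e a b $ r * cnj (e a' b' $ c))))"
    if ij: "i < m" "j < k" and r: "r < d" and c: "c < d" for i j r c
  proof (cases "pb i = 0 \<or> pt j = 0")
    case True then show ?thesis by auto
  next
    case False
    then have g: "Good i j" using goodsupp ij by auto
    have V: "inV (\<psi> i j)" using goodV[OF g] .
    have "(\<psi> i j) $ r * cnj ((\<psi> i j) $ c) =
      (\<Sum>a<m. \<Sum>b<k. braket (e a b) (\<psi> i j) * e a b $ r) * cnj (\<Sum>a'<m. \<Sum>b'<k. braket (e a' b') (\<psi> i j) * e a' b' $ c)"
      using V r c unfolding inV_def by simp
    also have "\<dots> = (\<Sum>a<m. \<Sum>b<k. \<Sum>a'<m. \<Sum>b'<k.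
        (braket (e a b) (\<psi> i j) * cnj (braket (e a' b') (\<psi> i j))) * (e a b $ r * cnj (e a' b' $ c)))"
      by (simp only: cnj_sum sum_distrib_right, simp only: sum_distrib_left, simp add: mult_ac)
    also have "\<dots> = (\<Sum>a<m. \<Sum>b<k. \<Sum>a'<m. \<Sum>b'<k.
        (Rb (\<psi> i \<Omega>t) a a' * Rt (\<psi> \<Omega>b j) b b') * (e a b $ r * cnj (e a' b' $ c)))"
    proof (intro sum.cong refl)
      fix a b a' b' assume "a \<in> {..<m}" "b \<in> {..<k}" "a' \<in> {..<m}" "b' \<in> {..<k}"
      then have ab: "a < m" "b < k" "a' < m" "b' < k" by auto
      have "braket (e a b) (\<psi> i j) * cnj (braket (e a' b') (\<psi> i j)) = Rb (\<psi> i j) a a' * Rt (\<psi> i j) b b'"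
        using fac[OF ij V[unfolded \<psi>_def] ab(1,3,2,4)] unfolding \<psi>_def .
      also have "Rb (\<psi> i j) a a' = Rb (\<psi> i \<Omega>t) a a'"
        using Rb_inv[OF ij(1) \<Omega>_mem(2) ij(2) goodV[OF goodb[OF ij(1)], unfolded \<psi>_def] V[unfolded \<psi>_def] ab(1,3)]
          False goodb ij unfolding \<psi>_def by auto
      also have "Rt (\<psi> i j) b b' = Rt (\<psi> \<Omega>b j) b b'"
        using Rt_inv[OF \<Omega>_mem(1) ij(1) ij(2) goodV[OF goodt[OF ij(2)], unfolded \<psi>_def] V[unfolded \<psi>_def] ab(2,4)]
          False unfolding \<psi>_def by auto
      finally show "braket (e a b) (\<psi> i j) * cnj (braket (e a' b') (\<psi> i j)) * (e a b $ r * cnj (e a' b' $ c)) =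
        Rb (\<psi> i \<Omega>t) a a' * Rt (\<psi> \<Omega>b j) b b' * (e a b $ r * cnj (e a' b' $ c))" by simp
    qed
    finally show ?thesis by (simp add: sum_distrib_left mult_ac)
  qed
  have main: "U * P * mat_adjoint U = prod_op d e m k \<sigma>b \<sigma>t"
  proof (rule eq_matI)
    fix r c assume "r < dim_row (prod_op d e m k \<sigma>b \<sigma>t)" "c < dim_col (prod_op d e m k \<sigma>b \<sigma>t)"
    then have r: "r < d" and c: "c < d" by (simp_all add: prod_op_def)
    have "(U * P * mat_adjoint U) $$ (r,c) = (\<Sum>i<m. \<Sum>j<k. complex_of_real (pb i) * complex_of_real (pt j) *
         ((\<psi> i j) $ r * cnj ((\<psi> i j) $ c)))"
      unfolding \<psi>_def
      by (rule conj_sum_mat[OF Uc _ _ _ r c], auto simp: P_def prod_op_carrier diag_prod_op ecar)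
    also have "\<dots> = (\<Sum>i<m. \<Sum>j<k. \<Sum>a<m. \<Sum>b<k. \<Sum>a'<m. \<Sum>b'<k. complex_of_real (pb i) * complex_of_real (pt j) *
          (Rb (\<psi> i \<Omega>t) a a' * Rt (\<psi> \<Omega>b j) b b' * (e a b $ r * cnj (e a' b' $ c))))"
      using trm r c by (intro sum.cong refl) auto
    also have "\<dots> = (\<Sum>a<m. \<Sum>b<k. \<Sum>a'<m. \<Sum>b'<k. \<Sum>i<m. \<Sum>j<k. complex_of_real (pb i) * complex_of_real (pt j) *
          (Rb (\<psi> i \<Omega>t) a a' * Rt (\<psi> \<Omega>b j) b b' * (e a b $ r * cnj (e a' b' $ c))))"
      by (rule reorder6)
    also have "\<dots> = (\<Sum>a<m. \<Sum>b<k. e a b $ r * (\<Sum>a'<m. \<Sum>b'<k. \<sigma>b $$ (a,a') * \<sigma>t $$ (b,b') * cnj (e a' b' $ c)))"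
      unfolding sum_distrib_left
    proof (intro sum.cong refl)
      fix a b a' b' assume "a \<in> {..<m}" "b \<in> {..<k}" "a' \<in> {..<m}" "b' \<in> {..<k}"
      then have ab: "a < m" "b < k" "a' < m" "b' < k" by auto
      show "(\<Sum>i<m. \<Sum>j<k. complex_of_real (pb i) * complex_of_real (pt j) *
          (Rb (\<psi> i \<Omega>t) a a' * Rt (\<psi> \<Omega>b j) b b' * (e a b $ r * cnj (e a' b' $ c)))) =
          e a b $ r * (\<sigma>b $$ (a,a') * \<sigma>t $$ (b,b') * cnj (e a' b' $ c))"
        unfolding \<sigma>b_def \<sigma>t_def using ab
        by (simp add: sum_product sum_distrib_left sum_distrib_right mult_ac) (rule sum.swap)
    qed
    also have "\<dots> = prod_op d e m k \<sigma>b \<sigma>t $$ (r,c)" using prod_op_entry[OF r c] by simp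
    finally show "(U * P * mat_adjoint U) $$ (r,c) = prod_op d e m k \<sigma>b \<sigma>t $$ (r,c)" .
  qed (insert prod_op_carrier Uc, auto simp: P_def prod_op_def)

  have \<sigma>bc: "\<sigma>b \<in> carrier_mat m m" and \<sigma>tc: "\<sigma>t \<in> carrier_mat k k" unfolding \<sigma>b_def \<sigma>t_def by auto
  have Rb_herm: "cnj (Rb v a' a) = Rb v a a'" for v a a' unfolding Rb_def by (simp add: mult.commute)
  have Rt_herm: "cnj (Rt v b' b) = Rt v b b'" for v b b' unfolding Rt_def by (simp add: mult.commute)
  have herm_b: "hermitian_mat \<sigma>b" unfolding hermitian_mat_def
  proof (rule eq_matI)
    fix a a' assume "a < dim_row \<sigma>b" "a' < dim_col \<sigma>b"
    then have aa: "a < m" "a' < m" using \<sigma>bc by auto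
    show "mat_adjoint \<sigma>b $$ (a,a') = \<sigma>b $$ (a,a')"
      using aa by (simp add: adj_entry[OF \<sigma>bc]) (simp add: \<sigma>b_def Rb_herm)
  qed (insert \<sigma>bc, auto)
  have herm_t: "hermitian_mat \<sigma>t" unfolding hermitian_mat_def
  proof (rule eq_matI)
    fix a a' assume "a < dim_row \<sigma>t" "a' < dim_col \<sigma>t"
    then have aa: "a < k" "a' < k" using \<sigma>tc by auto
    show "mat_adjoint \<sigma>t $$ (a,a') = \<sigma>t $$ (a,a')"
      using aa by (simp add: adj_entry[OF \<sigma>tc]) (simp add: \<sigma>t_def Rt_herm)
  qed (insert \<sigma>tc, auto)
  have VO: "inV (U *\<^sub>v e \<Omega>b \<Omega>t)" using goodV[OF goodO] unfolding \<psi>_def .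
  have spec_b: "spec_mset \<sigma>b = spec_mset (diag_of m pb)"
  proof -
    have "char_poly (mat m m (\<lambda>(a,a'). \<Sum>i<m. complex_of_real (pb i) * Rb (\<psi> i \<Omega>t) a a'))
         = char_poly (diag_of m pb)"
    proof (rule spec_lemma[where n=m and nn=k and C="\<lambda>i x y. braket (e x y) (\<psi> i \<Omega>t)" and p=pb
          and good="\<lambda>i. Good i \<Omega>t" and R="\<lambda>i. Rb (\<psi> i \<Omega>t)" and T="Rt (\<psi> \<Omega>b \<Omega>t)"], unfold \<psi>_def)
      show "\<forall>i<m. pb i \<noteq> 0 \<longrightarrow> Good i \<Omega>t" using goodb by auto
      show "\<forall>i<m. Good i \<Omega>t \<longrightarrow> (\<forall>x<m. \<forall>x'<m. \<forall>y<k. \<forall>y'<k.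
        braket (e x y) (U *\<^sub>v e i \<Omega>t) * cnj (braket (e x' y') (U *\<^sub>v e i \<Omega>t)) =
        Rb (U *\<^sub>v e i \<Omega>t) x x' * Rt (U *\<^sub>v e \<Omega>b \<Omega>t) y y')"
      proof (intro allI impI)
        fix i x x' y y' assume i: "i < m" and g: "Good i \<Omega>t" and xy: "x < m" "x' < m" "y < k" "y' < k"
        have V: "inV (U *\<^sub>v e i \<Omega>t)" using goodV[OF g] unfolding \<psi>_def .
        show "braket (e x y) (U *\<^sub>v e i \<Omega>t) * cnj (braket (e x' y') (U *\<^sub>v e i \<Omega>t)) =
          Rb (U *\<^sub>v e i \<Omega>t) x x' * Rt (U *\<^sub>v e \<Omega>b \<Omega>t) y y'"
          using fac[OF i \<Omega>_mem(2) V xy] Rt_inv[OF \<Omega>_mem(1) i \<Omega>_mem(2) VO V xy(3,4)] by simp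
      qed
      show "\<forall>i<m. Good i \<Omega>t \<longrightarrow> (\<forall>x<m. \<forall>x'<m. Rb (U *\<^sub>v e i \<Omega>t) x x' =
        (\<Sum>y<k. braket (e x y) (U *\<^sub>v e i \<Omega>t) * cnj (braket (e x' y) (U *\<^sub>v e i \<Omega>t))))"
        by (simp add: Rb_def)
      show "\<forall>i<m. Good i \<Omega>t \<longrightarrow> (\<forall>y<k. \<forall>y'<k. Rt (U *\<^sub>v e \<Omega>b \<Omega>t) y y' =
        (\<Sum>x<m. braket (e x y) (U *\<^sub>v e i \<Omega>t) * cnj (braket (e x y') (U *\<^sub>v e i \<Omega>t))))"
      proof (intro allI impI)
        fix i y y' assume i: "i < m" and g: "Good i \<Omega>t" and y: "y < k" "y' < k"
        have V: "inV (U *\<^sub>v e i \<Omega>t)" using goodV[OF g] unfolding \<psi>_def .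
        show "Rt (U *\<^sub>v e \<Omega>b \<Omega>t) y y' =
          (\<Sum>x<m. braket (e x y) (U *\<^sub>v e i \<Omega>t) * cnj (braket (e x y') (U *\<^sub>v e i \<Omega>t)))"
          using Rt_inv[OF \<Omega>_mem(1) i \<Omega>_mem(2) VO V y] by (simp add: Rt_def)
      qed
      show "\<forall>i<m. \<forall>i'<m. Good i \<Omega>t \<longrightarrow> Good i' \<Omega>t \<longrightarrow>
        (\<Sum>x<m. \<Sum>y<k. cnj (braket (e x y) (U *\<^sub>v e i \<Omega>t)) * braket (e x y) (U *\<^sub>v e i' \<Omega>t)) =
        (if i = i' then 1 else 0)"
      proof (intro allI impI)
        fix i i' assume i: "i < m" and i': "i' < m" and g: "Good i \<Omega>t" and g': "Good i' \<Omega>t"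
        have V: "inV (U *\<^sub>v e i \<Omega>t)" using goodV[OF g] unfolding \<psi>_def .
        have V': "inV (U *\<^sub>v e i' \<Omega>t)" using goodV[OF g'] unfolding \<psi>_def .
        have "(\<Sum>x<m. \<Sum>y<k. cnj (braket (e x y) (U *\<^sub>v e i \<Omega>t)) * braket (e x y) (U *\<^sub>v e i' \<Omega>t))
          = braket (U *\<^sub>v e i \<Omega>t) (U *\<^sub>v e i' \<Omega>t)"
          using braket_inV[OF inV_carrier[OF V] V'] by (simp add: mult.commute)
        also have "\<dots> = braket (e i \<Omega>t) (e i' \<Omega>t)" using braket_U ecar i i' \<Omega>_mem by auto
        also have "\<dots> = (if i = i' then 1 else 0)" using eon i i' \<Omega>_mem by auto
        finally show "(\<Sum>x<m. \<Sum>y<k. cnj (braket (e x y) (U *\<^sub>v e i \<Omega>t)) * braket (e x y) (U *\<^sub>v e i' \<Omega>t)) =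
          (if i = i' then 1 else 0)" .
      qed
      show "\<exists>i<m. Good i \<Omega>t" using goodO \<Omega>_mem by auto
    qed
    then show ?thesis unfolding spec_mset_def \<sigma>b_def by simp
  qed
  have spec_t: "spec_mset \<sigma>t = spec_mset (diag_of k pt)"
  proof -
    have "char_poly (mat k k (\<lambda>(b,b'). \<Sum>j<k. complex_of_real (pt j) * Rt (\<psi> \<Omega>b j) b b'))
         = char_poly (diag_of k pt)"
    proof (rule spec_lemma[where n=k and nn=m and C="\<lambda>j y x. braket (e x y) (\<psi> \<Omega>b j)" and p=pt
          and good="\<lambda>j. Good \<Omega>b j" and R="\<lambda>j. Rt (\<psi> \<Omega>b j)" and T="Rb (\<psi> \<Omega>b \<Omega>t)"], unfold \<psi>_def)
      show "\<forall>j<k. pt j \<noteq> 0 \<longrightarrow> Good \<Omega>b j" using goodt by auto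
      show "\<forall>j<k. Good \<Omega>b j \<longrightarrow> (\<forall>y<k. \<forall>y'<k. \<forall>x<m. \<forall>x'<m.
        braket (e x y) (U *\<^sub>v e \<Omega>b j) * cnj (braket (e x' y') (U *\<^sub>v e \<Omega>b j)) =
        Rt (U *\<^sub>v e \<Omega>b j) y y' * Rb (U *\<^sub>v e \<Omega>b \<Omega>t) x x')"
      proof (intro allI impI)
        fix j y y' x x' assume j: "j < k" and g: "Good \<Omega>b j" and xy: "y < k" "y' < k" "x < m" "x' < m"
        have V: "inV (U *\<^sub>v e \<Omega>b j)" using goodV[OF g] unfolding \<psi>_def .
        show "braket (e x y) (U *\<^sub>v e \<Omega>b j) * cnj (braket (e x' y') (U *\<^sub>v e \<Omega>b j)) =
          Rt (U *\<^sub>v e \<Omega>b j) y y' * Rb (U *\<^sub>v e \<Omega>b \<Omega>t) x x'"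
          using fac[OF \<Omega>_mem(1) j V xy(3,4,1,2)] Rb_inv[OF \<Omega>_mem(1) \<Omega>_mem(2) j VO V xy(3,4)] by simp
      qed
      show "\<forall>j<k. Good \<Omega>b j \<longrightarrow> (\<forall>y<k. \<forall>y'<k. Rt (U *\<^sub>v e \<Omega>b j) y y' =
        (\<Sum>x<m. braket (e x y) (U *\<^sub>v e \<Omega>b j) * cnj (braket (e x y') (U *\<^sub>v e \<Omega>b j))))"
        by (simp add: Rt_def)
      show "\<forall>j<k. Good \<Omega>b j \<longrightarrow> (\<forall>x<m. \<forall>x'<m. Rb (U *\<^sub>v e \<Omega>b \<Omega>t) x x' =
        (\<Sum>y<k. braket (e x y) (U *\<^sub>v e \<Omega>b j) * cnj (braket (e x' y) (U *\<^sub>v e \<Omega>b j))))"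
      proof (intro allI impI)
        fix j x x' assume j: "j < k" and g: "Good \<Omega>b j" and x: "x < m" "x' < m"
        have V: "inV (U *\<^sub>v e \<Omega>b j)" using goodV[OF g] unfolding \<psi>_def .
        show "Rb (U *\<^sub>v e \<Omega>b \<Omega>t) x x' =
          (\<Sum>y<k. braket (e x y) (U *\<^sub>v e \<Omega>b j) * cnj (braket (e x' y) (U *\<^sub>v e \<Omega>b j)))"
          using Rb_inv[OF \<Omega>_mem(1) \<Omega>_mem(2) j VO V x] by (simp add: Rb_def)
      qed
      show "\<forall>j<k. \<forall>j'<k. Good \<Omega>b j \<longrightarrow> Good \<Omega>b j' \<longrightarrow>
        (\<Sum>y<k. \<Sum>x<m. cnj (braket (e x y) (U *\<^sub>v e \<Omega>b j)) * braket (e x y) (U *\<^sub>v e \<Omega>b j')) =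
        (if j = j' then 1 else 0)"
      proof (intro allI impI)
        fix j j' assume j: "j < k" and j': "j' < k" and g: "Good \<Omega>b j" and g': "Good \<Omega>b j'"
        have V: "inV (U *\<^sub>v e \<Omega>b j)" using goodV[OF g] unfolding \<psi>_def .
        have V': "inV (U *\<^sub>v e \<Omega>b j')" using goodV[OF g'] unfolding \<psi>_def .
        have "(\<Sum>y<k. \<Sum>x<m. cnj (braket (e x y) (U *\<^sub>v e \<Omega>b j)) * braket (e x y) (U *\<^sub>v e \<Omega>b j'))
          = (\<Sum>x<m. \<Sum>y<k. cnj (braket (e x y) (U *\<^sub>v e \<Omega>b j)) * braket (e x y) (U *\<^sub>v e \<Omega>b j'))"
          by (rule sum.swap)
        also have "\<dots> = braket (U *\<^sub>v e \<Omega>b j) (U *\<^sub>v e \<Omega>b j')"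
          using braket_inV[OF inV_carrier[OF V] V'] by (simp add: mult.commute)
        also have "\<dots> = braket (e \<Omega>b j) (e \<Omega>b j')" using braket_U ecar j j' \<Omega>_mem by auto
        also have "\<dots> = (if j = j' then 1 else 0)" using eon j j' \<Omega>_mem by auto
        finally show "(\<Sum>y<k. \<Sum>x<m. cnj (braket (e x y) (U *\<^sub>v e \<Omega>b j)) * braket (e x y) (U *\<^sub>v e \<Omega>b j')) =
          (if j = j' then 1 else 0)" .
      qed
      show "\<exists>j<k. Good \<Omega>b j" using goodO \<Omega>_mem by auto
    qed
    then show ?thesis unfolding spec_mset_def \<sigma>t_def by simp
  qed
  show ?thesis
  proof (intro conjI ballI exI)
    fix v :: "complex vec" assume v: "v \<in> carrier_vec d"
    show "in_span_fam d e ({..<m} \<times> {..<k})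
        ((U * prod_op d e m k (diag_of m pb) (diag_of k pt) * mat_adjoint U) *\<^sub>v v)"
      using main prod_op_span[OF v] unfolding P_def by simp
  next
    show "U * prod_op d e m k (diag_of m pb) (diag_of k pt) * mat_adjoint U = prod_op d e m k \<sigma>b \<sigma>t"
      using main unfolding P_def .
  qed (fact \<sigma>bc \<sigma>tc herm_b herm_t spec_b spec_t)+
qed


end
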